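(* Let $(I,\leq)$ be a finite poset containing two incomparable elements. Then the collection of nonzero functors in $\mathcal C=\{\mathrm{coker}(G\subseteq F)\mid G\subseteq F\subseteq K_I\}$ is not independent, and the functor $\mathcal Q\colon\Omega^{\mathrm{op}}\to\mathrm{Fun}(I,\mathrm{vect}_K)$ is not thin.
   Context: $K$ is a field, $\mathrm{vect}_K$ finite-dimensional $K$-vector spaces, $K_I$ the constant functor with value $K$; subfunctors of $K_I$ are identified with their supports $\mathrm{supp}(F)=\{v\mid F(v)\neq0\}$, which are upsets. $\mathrm{Sub}(I)$ is the set of subfunctors of $K_I$ ordered by $F\preccurlyeq G$ iff $\mathrm{supp}(F)\supseteq\mathrm{supp}(G)$. $\Omega:=\{(F,G)\in\mathrm{Sub}(I)^2\mid F\preccurlyeq G\}$ with the product order, and $\mathcal Q\colon\Omega^{\mathrm{op}}\to\mathrm{Fun}(I,\mathrm{vect}_K)$ sends $(F,G)$ to $\mathrm{coker}(G\subseteq F)$, and a relation $(F,G)\preccurlyeq(F',G')$ to the natural transformation $\mathrm{coker}(G'\subseteq F')\to\mathrm{coker}(G\subseteq F)$ induced by the inclusions $F'\subseteq F$, $G'\subseteq G$. A collection $\mathcal C'$ of objects is independent if for every finite direct sum $X$ of elements of $\mathcal C'$ there is a unique finitely supported $\beta\colon\mathcal C'\to\mathbb N$ with $X\cong\bigoplus_{A\in\mathcal C'}A^{\beta(A)}$. For a finite poset $J$ and $\mathcal P\colon J^{\mathrm{op}}\to\mathrm{Fun}(I,\mathrm{vect}_K)$: $K(a,-)\colon J\to\mathrm{vect}_K$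 is the free functor ($K$ at $b\succcurlyeq a$, else $0$); $\mathcal RM=\mathrm{Nat}_I(\mathcal P(-),M)$ with left adjoint $\mathcal L$ (so $\mathcal LK(a,-)\cong\mathcal P(a)$); $\eta_a\colon K(a,-)\to\mathcal R\mathcal LK(a,-)$ is the unit; $\mathcal P$ is thin if every $\eta_a$ is pointwise surjective. *)

theory Defs
  imports "Jordan_Normal_Form.Matrix"
begin

text \<open>A functor I -> vect_K (I a finite poset, K a field) is represented concretely:
  each finite-dimensional vector space M(v) is K^(d v), and each structure map
  M(v <= w) is a (d w) x (d v) matrix.\<close>

type_synonym ('i,'k) rep = "('i \<Rightarrow> nat) \<times> ('i \<Rightarrow> 'i \<Rightarrow> 'k mat)"

definition rdim :: "('i,'k) rep \<Rightarrow> 'i \<Rightarrow> nat" where "rdim M = fst M"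
definition rmap :: "('i,'k) rep \<Rightarrow> 'i \<Rightarrow> 'i \<Rightarrow> 'k mat" where "rmap M = snd M"

definition is_rep :: "('i::order,'k::field) rep \<Rightarrow> bool" where
  "is_rep M \<longleftrightarrow>
     (\<forall>v w. v \<le> w \<longrightarrow> rmap M v w \<in> carrier_mat (rdim M w) (rdim M v)) \<and>
     (\<forall>v. rmap M v v = 1\<^sub>m (rdim M v)) \<and>
     (\<forall>u v w. u \<le> v \<longrightarrow> v \<le> w \<longrightarrow> rmap M u w = rmap M v w * rmap M u v)"

definition nat_trans :: "('i::order,'k::field) rep \<Rightarrow> ('i,'k) rep \<Rightarrow> ('i \<Rightarrow> 'k mat) \<Rightarrow> bool" where
  "nat_trans M N \<phi> \<longleftrightarrow>
     (\<forall>v. \<phi> v \<in> carrier_mat (rdim N v) (rdim M v)) \<and>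
     (\<forall>v w. v \<le> w \<longrightarrow> \<phi> w * rmap M v w = rmap N v w * \<phi> v)"

definition rep_iso :: "('i::order,'k::field) rep \<Rightarrow> ('i,'k) rep \<Rightarrow> bool" where
  "rep_iso M N \<longleftrightarrow> (\<exists>\<phi>. nat_trans M N \<phi> \<and> (\<forall>v. invertible_mat (\<phi> v)))"

definition zero_rep :: "('i,'k::field) rep" where
  "zero_rep = (\<lambda>v. 0, \<lambda>v w. 0\<^sub>m 0 0)"

definition is_zero_rep :: "('i,'k) rep \<Rightarrow> bool" where
  "is_zero_rep M \<longleftrightarrow> (\<forall>v. rdim M v = 0)"

definition dsum :: "('i,'k::field) rep \<Rightarrow> ('i,'k) rep \<Rightarrow> ('i,'k) rep" where
  "dsum M N = (\<lambda>v. rdim M v + rdim N v,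
     \<lambda>v w. four_block_mat (rmap M v w) (0\<^sub>m (rdim M w) (rdim N v))
                          (0\<^sub>m (rdim N w) (rdim M v)) (rmap N v w))"

definition dsum_list :: "('i,'k::field) rep list \<Rightarrow> ('i,'k) rep" where
  "dsum_list xs = foldr dsum xs zero_rep"

definition dsum_mset :: "('i,'k::field) rep multiset \<Rightarrow> ('i,'k) rep" where
  "dsum_mset \<beta> = dsum_list (SOME ys. mset ys = \<beta>)"

text \<open>Independence of a collection C of objects: every finite direct sum of members of C
  is isomorphic to a direct sum with a unique finitely supported multiplicity
  function beta : C -> nat (encoded as a multiset supported in C).\<close>
definition indep_collection :: "('i::order,'k::field) rep set \<Rightarrow> bool" where
  "indep_collection C \<longleftrightarrow>
     (\<forall>xs. set xs \<subseteq> C \<longrightarrow>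
        (\<exists>!\<beta>. set_mset \<beta> \<subseteq> C \<and> rep_iso (dsum_list xs) (dsum_mset \<beta>)))"

text \<open>Subfunctors of K_I, identified with their supports: the upsets of I.\<close>
definition upset :: "'i::order set \<Rightarrow> bool" where
  "upset S \<longleftrightarrow> (\<forall>x\<in>S. \<forall>y. x \<le> y \<longrightarrow> y \<in> S)"

text \<open>coker(G \<subseteq> F) for subfunctors G \<subseteq> F of K_I: K on F - G, 0 elsewhere,
  structure maps induced by the identity of K.\<close>
definition coker_rep :: "'i set \<Rightarrow> 'i set \<Rightarrow> ('i,'k::field) rep" where
  "coker_rep F G =
     (\<lambda>v. if v \<in> F - G then 1 else 0,
      \<lambda>v w. mat (if w \<in> F - G then 1 else 0) (if v \<in> F - G then 1 else 0) (\<lambda>_. 1))"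

definition coker_collection :: "('i::order,'k::field) rep set" where
  "coker_collection = {coker_rep F G | F G. upset F \<and> upset G \<and> G \<subseteq> F}"

text \<open>Omega = {(F,G) in Sub(I)^2 | F \<preccurlyeq> G}, where F \<preccurlyeq> G iff supp F \<supseteq> supp G.\<close>
definition Omega :: "('i::order set \<times> 'i set) set" where
  "Omega = {(F,G). upset F \<and> upset G \<and> G \<subseteq> F}"

definition Omega_le :: "('i set \<times> 'i set) \<Rightarrow> ('i set \<times> 'i set) \<Rightarrow> bool" where
  "Omega_le a b \<longleftrightarrow> fst b \<subseteq> fst a \<and> snd b \<subseteq> snd a"

text \<open>Q on objects, and on a relation a \<preccurlyeq> b the natural transformation Q(b) -> Q(a)
  induced by the inclusions.\<close>
definition Qobj :: "('i set \<times> 'i set) \<Rightarrow> ('i,'k::field) rep" where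
  "Qobj a = coker_rep (fst a) (snd a)"

definition Qmor :: "('i set \<times> 'i set) \<Rightarrow> ('i set \<times> 'i set) \<Rightarrow> 'i \<Rightarrow> 'k::field mat" where
  "Qmor a b = (\<lambda>v. mat (rdim (Qobj a :: ('i,'k) rep) v) (rdim (Qobj b :: ('i,'k) rep) v) (\<lambda>_. 1))"

text \<open>Thinness of P : J^op -> Fun(I, vect_K) (J finite poset given by carrier and order,
  Pmor a b : P(b) -> P(a) for a \<le> b).  With L K(a,-) \<cong> P(a), the unit
  eta_a at b is the map K(a,b) -> Nat(P(b),P(a)) sending 1 to P(a \<le> b) when a \<le> b,
  and the zero map 0 -> Nat(P(b),P(a)) otherwise.  Pointwise surjectivity of all eta_a
  is therefore the following condition.\<close>
definition thin :: "'j set \<Rightarrow> ('j \<Rightarrow> 'j \<Rightarrow> bool) \<Rightarrow> ('j \<Rightarrow> ('i::order,'k::field) rep)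
                     \<Rightarrow> ('j \<Rightarrow> 'j \<Rightarrow> 'i \<Rightarrow> 'k mat) \<Rightarrow> bool" where
  "thin J jle P Pmor \<longleftrightarrow>
     (\<forall>a\<in>J. \<forall>b\<in>J. \<forall>\<phi>. nat_trans (P b) (P a) \<phi> \<longrightarrow>
        (if jle a b then (\<exists>c. \<forall>v. \<phi> v = c \<cdot>\<^sub>m Pmor a b v)
         else (\<forall>v. \<phi> v = 0\<^sub>m (rdim (P a) v) (rdim (P b) v))))"

end

theory Submission
  imports Defs
begin

definition good :: "('i::order,'k::field) rep \<Rightarrow> bool" where
  "good M \<longleftrightarrow> (\<forall>v w. v \<le> w \<longrightarrow> rmap M v w \<in> carrier_mat (rdim M w) (rdim M v)) \<and>
     (\<forall>v. rmap M v v = 1\<^sub>m (rdim M v))"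

lemma good_zero: "good (zero_rep :: ('i::order,'k::field) rep)"
  unfolding good_def zero_rep_def rdim_def rmap_def by (auto intro!: eq_matI)

lemma good_dsum: "good M \<Longrightarrow> good N \<Longrightarrow> good (dsum M N)"
  unfolding good_def dsum_def by (auto simp: rdim_def rmap_def)

lemma rdim_dsum: "rdim (dsum M N) v = rdim M v + rdim N v"
  unfolding dsum_def rdim_def by simp

lemma good_dsum_list: "(\<And>A. A \<in> set xs \<Longrightarrow> good A) \<Longrightarrow> good (dsum_list xs)"
  unfolding dsum_list_def by (induction xs) (auto simp: good_zero good_dsum)

lemma rdim_dsum_list: "rdim (dsum_list xs) v = sum_list (map (\<lambda>A. rdim A v) xs)"
  unfolding dsum_list_def by (induction xs) (auto simp: dsum_def zero_rep_def rdim_def)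

lemma dsum_mset_props:
  assumes "\<And>A. A \<in> set_mset \<beta> \<Longrightarrow> good A"
  shows "good (dsum_mset \<beta>)" "rdim (dsum_mset \<beta>) v = sum_mset (image_mset (\<lambda>A. rdim A v) \<beta>)"
proof -
  obtain ys where ys: "mset ys = \<beta>" using ex_mset by blast
  define zs where "zs = (SOME ys. mset ys = \<beta>)"
  have zs: "mset zs = \<beta>" unfolding zs_def by (rule someI, rule ys)
  show "good (dsum_mset \<beta>)" unfolding dsum_mset_def zs_def[symmetric]
    by (rule good_dsum_list) (use assms zs in auto)
  show "rdim (dsum_mset \<beta>) v = sum_mset (image_mset (\<lambda>A. rdim A v) \<beta>)"
    unfolding dsum_mset_def zs_def[symmetric] rdim_dsum_list
    by (metis zs sum_mset_sum_list mset_map)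
qed

lemma good_coker: "good (coker_rep F G :: ('i::order,'k::field) rep)"
  unfolding good_def coker_rep_def rdim_def rmap_def by (auto intro!: eq_matI)

lemma inv_one: "invertible_mat (1\<^sub>m n :: 'k::field mat)"
  unfolding invertible_mat_def inverts_mat_def square_mat.simps by (auto intro!: exI[of _ "1\<^sub>m n"])

lemma iso_lemma:
  assumes gM: "good M" and gN: "good N" and dd: "\<And>v. rdim M v = rdim N v"
    and an: "\<And>v w. v \<le> w \<Longrightarrow> v \<noteq> w \<Longrightarrow> rdim M v = 0 \<or> rdim M w = 0"
  shows "rep_iso M N"
proof -
  have nt: "nat_trans M N (\<lambda>v. 1\<^sub>m (rdim M v))"
    unfolding nat_trans_def
  proof (intro conjI allI impI)
    fix v show "1\<^sub>m (rdim M v) \<in> carrier_mat (rdim N v) (rdim M v)"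
      using dd[of v] by (simp only: one_carrier_mat)
  next
    fix v w :: 'a assume vw: "v \<le> w"
    have cM: "rmap M v w \<in> carrier_mat (rdim M w) (rdim M v)"
      using gM vw unfolding good_def by blast
    have cN0: "rmap N v w \<in> carrier_mat (rdim N w) (rdim N v)"
      using gN vw unfolding good_def by blast
    have cN: "rmap N v w \<in> carrier_mat (rdim M w) (rdim M v)"
      using cN0 dd[of v] dd[of w] by simp
    show "1\<^sub>m (rdim M w) * rmap M v w = rmap N v w * 1\<^sub>m (rdim M v)"
    proof (cases "v = w")
      case True
      have e1: "rmap M v v = 1\<^sub>m (rdim M v)" using gM unfolding good_def by blast
      have e2: "rmap N v v = 1\<^sub>m (rdim N v)" using gN unfolding good_def by blast
      have f1: "rmap M v w = 1\<^sub>m (rdim M v)" using True e1 by simp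
      have f2: "rmap N v w = 1\<^sub>m (rdim M v)" using True e2 dd[of v] by simp
      have f3: "rdim M w = rdim M v" using True by simp
      have f4: "(1\<^sub>m (rdim M v) :: 'b mat) * 1\<^sub>m (rdim M v) = 1\<^sub>m (rdim M v)"
        by (rule left_mult_one_mat[OF one_carrier_mat])
      show ?thesis unfolding f1 f2 f3 by (rule trans[OF f4 f4[symmetric]])
    next
      case False
      have z: "rdim M v = 0 \<or> rdim M w = 0" using an[OF vw False] .
      have l: "1\<^sub>m (rdim M w) * rmap M v w = rmap M v w" using cM by simp
      have r: "rmap N v w * 1\<^sub>m (rdim M v) = rmap N v w" using cN by simp
      show ?thesis unfolding l r
      proof (rule eq_matI)
        fix i j assume "i < dim_row (rmap N v w)" "j < dim_col (rmap N v w)"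
        then show "rmap M v w $$ (i, j) = rmap N v w $$ (i, j)" using cN z by auto
      qed (use cM cN in auto)
    qed
  qed
  have "\<forall>v. invertible_mat (1\<^sub>m (rdim M v) :: 'b mat)" using inv_one by blast
  then show ?thesis unfolding rep_iso_def using nt by blast
qed

lemma rdim_coker: "rdim (coker_rep F G :: ('i,'k::field) rep) v = (if v \<in> F - G then 1 else 0)"
  unfolding rdim_def coker_rep_def by simp

theorem proposition6p4:
  fixes x y :: "'i::{finite,order}"
  assumes "\<not> x \<le> y" and "\<not> y \<le> x"
  shows "\<not> indep_collection {A \<in> (coker_collection :: ('i,'k::field) rep set). \<not> is_zero_rep A}
       \<and> \<not> thin Omega Omega_le (Qobj :: _ \<Rightarrow> ('i,'k) rep) Qmor"
proof
  have xy: "x \<noteq> y" using assms by auto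
  define F where "F = {z. x \<le> z \<or> y \<le> z}"
  define G where "G = {z. x < z \<or> y < z}"
  have uF: "upset F" unfolding upset_def F_def using order_trans by blast
  have uG: "upset G" unfolding upset_def G_def using less_le_trans by blast
  have GF: "G \<subseteq> F" unfolding F_def G_def by auto
  have FG: "F - G = {x, y}" unfolding F_def G_def using assms
    by (auto simp: less_le)
  define Fx where "Fx = {z. x \<le> z}"
  define Gx where "Gx = {z. x < z}"
  define Fy where "Fy = {z. y \<le> z}"
  define Gy where "Gy = {z. y < z}"
  have uFx: "upset Fx" "upset Gx" "Gx \<subseteq> Fx" "Fx - Gx = {x}"
    unfolding upset_def Fx_def Gx_def using order_trans less_le_trans by (auto simp: less_le)
  have uFy: "upset Fy" "upset Gy" "Gy \<subseteq> Fy" "Fy - Gy = {y}"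
    unfolding upset_def Fy_def Gy_def using order_trans less_le_trans by (auto simp: less_le)
  define C :: "('i,'k) rep" where "C = coker_rep F G"
  define Sx :: "('i,'k) rep" where "Sx = coker_rep Fx Gx"
  define Sy :: "('i,'k) rep" where "Sy = coker_rep Fy Gy"
  define CC where "CC = {A \<in> (coker_collection :: ('i,'k::field) rep set). \<not> is_zero_rep A}"
  have dC: "rdim C v = (if v = x \<or> v = y then 1 else 0)" for v
    unfolding C_def rdim_coker FG by auto
  have dSx: "rdim Sx v = (if v = x then 1 else 0)" for v
    unfolding Sx_def rdim_coker uFx(4) by auto
  have dSy: "rdim Sy v = (if v = y then 1 else 0)" for v
    unfolding Sy_def rdim_coker uFy(4) by auto
  have CCC: "C \<in> CC"
  proof -
    have "C \<in> coker_collection" unfolding coker_collection_def C_def using uF uG GF by blast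
    moreover have "\<not> is_zero_rep C" unfolding is_zero_rep_def not_all using dC[of x] by (intro exI[of _ x]) simp
    ultimately show ?thesis unfolding CC_def by blast
  qed
  have SxC: "Sx \<in> CC"
  proof -
    have "Sx \<in> coker_collection" unfolding coker_collection_def Sx_def using uFx by blast
    moreover have "\<not> is_zero_rep Sx" unfolding is_zero_rep_def not_all using dSx[of x] by (intro exI[of _ x]) simp
    ultimately show ?thesis unfolding CC_def by blast
  qed
  have SyC: "Sy \<in> CC"
  proof -
    have "Sy \<in> coker_collection" unfolding coker_collection_def Sy_def using uFy by blast
    moreover have "\<not> is_zero_rep Sy" unfolding is_zero_rep_def not_all using dSy[of y] by (intro exI[of _ y]) simp
    ultimately show ?thesis unfolding CC_def by blast
  qed
  have goodC: "A \<in> CC \<Longrightarrow> good A" for A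
  proof -
    assume "A \<in> CC"
    then obtain F' G' where "A = coker_rep F' G'" unfolding CC_def coker_collection_def by blast
    then show "good A" using good_coker by simp
  qed
  have anti: "v \<le> w \<Longrightarrow> v \<noteq> w \<Longrightarrow> rdim (dsum_list [C]) v = 0 \<or> rdim (dsum_list [C]) w = 0" for v w
    unfolding rdim_dsum_list using dC assms by auto
  have g0: "good (dsum_list [C])" by (rule good_dsum_list) (use goodC CCC in auto)
  have gC: "\<And>A. A \<in> set_mset {#C#} \<Longrightarrow> good A" using goodC CCC by auto
  have dC1: "rdim (dsum_mset {#C#}) v = rdim (dsum_list [C]) v" for v
    using dsum_mset_props(2)[of "{#C#}" v, OF gC] unfolding rdim_dsum_list by simp
  have i1: "rep_iso (dsum_list [C]) (dsum_mset {#C#})"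
    by (rule iso_lemma[OF g0 dsum_mset_props(1)[OF gC] dC1[symmetric] anti])
  have gS: "\<And>A. A \<in> set_mset {#Sx, Sy#} \<Longrightarrow> good A" using goodC SxC SyC by auto
  have dS: "rdim (dsum_mset {#Sx, Sy#}) v = rdim (dsum_list [C]) v" for v
    using dsum_mset_props(2)[of "{#Sx, Sy#}" v, OF gS] unfolding rdim_dsum_list using dC dSx dSy xy by auto
  have i2: "rep_iso (dsum_list [C]) (dsum_mset {#Sx, Sy#})"
    by (rule iso_lemma[OF g0 dsum_mset_props(1)[OF gS] dS[symmetric] anti])
  show "\<not> indep_collection {A \<in> (coker_collection :: ('i,'k::field) rep set). \<not> is_zero_rep A}"
  proof
    assume "indep_collection {A \<in> (coker_collection :: ('i,'k::field) rep set). \<not> is_zero_rep A}"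
    then have "indep_collection CC" unfolding CC_def .
    then have all: "\<forall>xs. set xs \<subseteq> CC \<longrightarrow> (\<exists>!\<beta>. set_mset \<beta> \<subseteq> CC \<and> rep_iso (dsum_list xs) (dsum_mset \<beta>))"
      unfolding indep_collection_def .
    have "set [C] \<subseteq> CC" using CCC by simp
    then have "\<exists>!\<beta>. set_mset \<beta> \<subseteq> CC \<and> rep_iso (dsum_list [C]) (dsum_mset \<beta>)"
      using all by blast
    then have u: "\<And>b1 b2. set_mset b1 \<subseteq> CC \<and> rep_iso (dsum_list [C]) (dsum_mset b1) \<Longrightarrow>
        set_mset b2 \<subseteq> CC \<and> rep_iso (dsum_list [C]) (dsum_mset b2) \<Longrightarrow> b1 = b2" by blast
    have p1: "set_mset {#C#} \<subseteq> CC \<and> rep_iso (dsum_list [C]) (dsum_mset {#C#})" using i1 CCC by simp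
    have p2: "set_mset {#Sx, Sy#} \<subseteq> CC \<and> rep_iso (dsum_list [C]) (dsum_mset {#Sx, Sy#})" using i2 SxC SyC by simp
    have "{#C#} = {#Sx, Sy#}" by (rule u[OF p1 p2])
    then have "size {#C#} = size {#Sx, Sy#}" by simp
    then show False by simp
  qed
  show "\<not> thin Omega Omega_le (Qobj :: _ \<Rightarrow> ('i,'k) rep) Qmor"
  proof
    assume th: "thin Omega Omega_le (Qobj :: _ \<Rightarrow> ('i,'k) rep) Qmor"
    define a where "a = (F, G)"
    have aO: "a \<in> Omega" unfolding a_def Omega_def using uF uG GF by auto
    have Qa: "(Qobj a :: ('i,'k) rep) = C" unfolding Qobj_def a_def C_def by simp
    define \<phi> :: "'i \<Rightarrow> 'k mat" where
      "\<phi> v = mat (rdim C v) (rdim C v) (\<lambda>_. if v = x then 1 else 0)" for v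
    have rm: "rmap C v w = mat (rdim C w) (rdim C v) (\<lambda>_. 1)" for v w
      unfolding C_def coker_rep_def rmap_def rdim_def by simp
    have nt: "nat_trans (Qobj a) (Qobj a) \<phi>"
      unfolding Qa nat_trans_def
    proof (intro conjI allI impI)
      fix v show "\<phi> v \<in> carrier_mat (rdim C v) (rdim C v)" unfolding \<phi>_def by simp
    next
      fix v w :: 'i assume vw: "v \<le> w"
      show "\<phi> w * rmap C v w = rmap C v w * \<phi> v"
      proof (cases "v = w")
        case True
        then show ?thesis unfolding rm \<phi>_def dC
          by (intro eq_matI) (auto simp: scalar_prod_def)
      next
        case False
        then have "rdim C v = 0 \<or> rdim C w = 0" using dC vw assms by auto
        then show ?thesis unfolding rm \<phi>_def by (intro eq_matI) auto
      qed
    qed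
    have "Omega_le a a" unfolding Omega_le_def by simp
    then obtain c where c: "\<And>v. \<phi> v = c \<cdot>\<^sub>m Qmor a a v"
      using th aO nt unfolding thin_def by fastforce
    have qm: "Qmor a a v = (mat (rdim C v) (rdim C v) (\<lambda>_. 1) :: 'k mat)" for v
      unfolding Qmor_def Qa by simp
    have "\<phi> x $$ (0,0) = 1" unfolding \<phi>_def dC by simp
    moreover have "\<phi> x $$ (0,0) = c" using c[of x] unfolding qm dC by simp
    moreover have "\<phi> y $$ (0,0) = 0" unfolding \<phi>_def dC using xy by simp
    moreover have "\<phi> y $$ (0,0) = c" using c[of y] unfolding qm dC by simp
    ultimately show False by simp
  qed
qed

end
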